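(* Let $n\ge2$ and let $X_1,\ldots,X_n$ be independent and identically distributed random vectors in $\mathbb{R}^n$ such that $X_1,\ldots,X_{n-1}$ are linearly independent almost surely, and assume moreover that they are bounded (there is $r>0$ with $\|X_j\|<r$ a.s.). Let $$Y=\frac{\wedge(X_1,\ldots,X_{n-1})}{\|\wedge(X_1,\ldots,X_{n-1})\|_\infty}.$$ Then: (1) for every $y\in\mathcal{C}_{n-1}(Y)$ one has $0\in\mathcal{C}_1(X_n\cdot y)$; (2) $0\in\mathcal{C}_1(X_n\cdot Y)$; (3) $\mathbb{E}\left[\dfrac{1}{|X_n\cdot Y|}\right]=+\infty$.
   Context: The generalized cross product $\wedge:(\mathbb{R}^n)^{n-1}\to\mathbb{R}^n$ is the formal determinant of the $n\times n$ matrix whose first row is $(\mathbf e_1,\ldots,\mathbf e_n)$ (canonical basis vectors) and whose $(j+1)$-th row is $(x_j(1),\ldots,x_j(n))$; it is orthogonal to each $x_j$ and vanishes iff $x_1,\ldots,x_{n-1}$ are linearly dependent. $\|v\|_\infty=\max_i|v(i)|$; $\cdot$ is the Euclidean inner product. For a random vector $Z$ in $\mathbb{R}^k$ and an integer $m\ge0$, the $m$-dimensional mould $\mathcal{C}_m(Z)$ is the set of all $z\in\mathbb{R}^k$ such that $\liminf_{\epsilon\to0^+}\mathbb{P}(\|Z-z\|_2<\epsilon)/\epsilon^m>0$. In (1) and (2), $X_n\cdot y$ and $X_n\cdot Y$ are real random variables. *)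

theory Defs
  imports "HOL-Probability.Probability"
begin

definition idx_rank :: "'n::{finite,linorder} \<Rightarrow> nat" where
  "idx_rank r = card {s. s < r}"

text \<open>Generalized cross product of x 1, ..., x (n-1) in R^n: the formal determinant
  whose first row is (e_1,...,e_n) and whose (j+1)-th row is x j.  Its i-th component is
  the coefficient of e_i, i.e. the determinant with e_i placed in the first row.\<close>
definition gen_cross :: "(nat \<Rightarrow> real^('n::{finite,linorder})) \<Rightarrow> real^('n::{finite,linorder})" where
  "gen_cross x = (\<chi> i. det (\<chi> r c. if idx_rank r = 0 then axis i 1 $ c
                                     else x (idx_rank r) $ c))"

definition mould :: "'a measure \<Rightarrow> nat \<Rightarrow> ('a \<Rightarrow> 'b::real_normed_vector) \<Rightarrow> 'b set" where
  "mould M m Z = {z. Liminf (at_right (0::real))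
       (\<lambda>\<epsilon>. ereal (measure M {\<omega> \<in> space M. norm (Z \<omega> - z) < \<epsilon>} / \<epsilon> ^ m)) > 0}"

end

theory Submission
  imports Defs
begin


lemma idx_rank_mono:
  fixes r s :: "'n::{finite,linorder}"
  assumes "r < s" shows "idx_rank r < idx_rank s"
  unfolding idx_rank_def
  by (rule psubset_card_mono) (use assms in auto)

lemma idx_rank_less: "idx_rank (r::'n::{finite,linorder}) < CARD('n)"
  unfolding idx_rank_def
  by (rule psubset_card_mono) auto

lemma idx_rank_inj: "inj (idx_rank :: 'n::{finite,linorder} \<Rightarrow> nat)"
  by (metis idx_rank_mono injI less_irrefl neq_iff)

lemma idx_rank_bij: "bij_betw (idx_rank :: 'n::{finite,linorder} \<Rightarrow> nat) UNIV {..<CARD('n)}"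
proof -
  have "idx_rank ` (UNIV::'n set) \<subseteq> {..<CARD('n)}" using idx_rank_less by auto
  moreover have "card (idx_rank ` (UNIV::'n set)) = card {..<CARD('n)}"
    using card_image[OF idx_rank_inj] by simp
  ultimately have "idx_rank ` (UNIV::'n set) = {..<CARD('n)}"
    by (intro card_subset_eq) auto
  then show ?thesis using idx_rank_inj by (simp add: bij_betw_def)
qed

lemma idx_rank_surj: "k < CARD('n::{finite,linorder}) \<Longrightarrow> \<exists>r::'n. idx_rank r = k"
  using idx_rank_bij[where 'n='n] unfolding bij_betw_def by (metis imageE lessThan_iff)

definition rowmat :: "real^('n::{finite,linorder}) \<Rightarrow> (nat \<Rightarrow> real^('n::{finite,linorder})) \<Rightarrow> real^('n::{finite,linorder})^('n::{finite,linorder})" where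
  "rowmat v x = (\<chi> r c. if idx_rank r = 0 then v $ c else x (idx_rank r) $ c)"

lemma gen_cross_inner:
  fixes x :: "nat \<Rightarrow> real^('n::{finite,linorder})"
  shows "gen_cross x \<bullet> v = det (rowmat v x)"
proof -
  obtain r0 :: 'n where r0: "idx_rank r0 = 0" using idx_rank_surj[of 0] by auto
  have iff: "idx_rank r = 0 \<longleftrightarrow> r = r0" for r :: 'n
    using idx_rank_inj r0 by (metis injD)
  define c where "c = (\<lambda>r::'n. (\<chi> cc. x (idx_rank r) $ cc))"
  have rm: "rowmat w x = (\<chi> r. if r = r0 then w else c r)" for w
    unfolding rowmat_def c_def by (simp add: iff vec_eq_iff)
  have "rowmat v x = (\<chi> r. if r = r0 then (\<Sum>i\<in>UNIV. (v$i) *s axis i 1) else c r)"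
    unfolding basis_expansion rm ..
  then have "det (rowmat v x) = (\<Sum>i\<in>UNIV. det (\<chi> r. if r = r0 then (v$i) *s axis i (1::real) else c r))"
    by (simp add: det_linear_row_sum)
  also have "\<dots> = (\<Sum>i\<in>UNIV. v$i * det (\<chi> r. if r = r0 then axis i (1::real) else c r))"
    by (simp add: det_row_mul)
  also have "\<dots> = (\<Sum>i\<in>UNIV. v$i * gen_cross x $ i)"
    unfolding gen_cross_def by (simp add: rm[symmetric] rowmat_def)
  also have "\<dots> = gen_cross x \<bullet> v"
    by (simp add: inner_vec_def mult.commute)
  finally show ?thesis by simp
qed

lemma gen_cross_orth:
  fixes x :: "nat \<Rightarrow> real^('n::{finite,linorder})"
  assumes "1 \<le> k" "k < CARD('n)"
  shows "gen_cross x \<bullet> x k = 0"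
proof -
  obtain r0 :: 'n where r0: "idx_rank r0 = 0" using idx_rank_surj[of 0] by auto
  obtain rk :: 'n where rk: "idx_rank rk = k" using idx_rank_surj[of k] assms by auto
  have "rk \<noteq> r0" using r0 rk assms by auto
  moreover have "row r0 (rowmat (x k) x) = row rk (rowmat (x k) x)"
    using r0 rk assms by (simp add: row_def rowmat_def vec_eq_iff)
  ultimately have "det (rowmat (x k) x) = 0" by (metis det_identical_rows)
  then show ?thesis by (simp add: gen_cross_inner)
qed

lemma gen_cross_nz:
  fixes x :: "nat \<Rightarrow> real^('n::{finite,linorder})"
  assumes inj: "inj_on x {1..CARD('n)-1}" and ind: "independent (x ` {1..CARD('n)-1})"
  shows "gen_cross x \<noteq> 0"
proof -
  define S where "S = x ` {1..CARD('n)-1}"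
  have cS: "card S = CARD('n) - 1" unfolding S_def using card_image[OF inj] by simp
  have fS: "finite S" unfolding S_def by simp
  have "\<exists>v. v \<notin> span S"
  proof (rule ccontr)
    assume "\<not> ?thesis"
    then have "span S = UNIV" by auto
    then have "dim (UNIV :: (real^('n::{finite,linorder})) set) = dim S" by (metis dim_span)
    also have "\<dots> \<le> card S" using fS by (simp add: dim_le_card')
    finally have "dim (UNIV :: (real^('n::{finite,linorder})) set) \<le> card S" .
    moreover have "dim (UNIV :: (real^('n::{finite,linorder})) set) = CARD('n)" by (simp add: dim_UNIV)
    moreover have "CARD('n) - 1 < CARD('n)" by simp
    ultimately show False using cS by linarith
  qed
  then obtain v where v: "v \<notin> span S" by blast
  obtain r0 :: 'n where r0: "idx_rank r0 = 0" using idx_rank_surj[of 0] by auto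
  have rowr: "row r (rowmat v x) = (if idx_rank r = 0 then v else x (idx_rank r))" for r
    by (simp add: row_def rowmat_def vec_eq_iff)
  have "rows (rowmat v x) = insert v S"
  proof
    show "rows (rowmat v x) \<subseteq> insert v S"
    proof
      fix w assume "w \<in> rows (rowmat v x)"
      then obtain r where r: "w = row r (rowmat v x)" unfolding rows_def by auto
      show "w \<in> insert v S"
      proof (cases "idx_rank r = 0")
        case True then show ?thesis using r rowr by simp
      next
        case False
        have "idx_rank r \<in> {1..CARD('n)-1}" using False idx_rank_less[of r] by auto
        then show ?thesis using r rowr False unfolding S_def by auto
      qed
    qed
    show "insert v S \<subseteq> rows (rowmat v x)"
    proof
      fix w assume "w \<in> insert v S"
      then show "w \<in> rows (rowmat v x)"
      proof
        assume "w = v" then show ?thesis unfolding rows_def using rowr[of r0] r0 by (simp del: row_def) (metis)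
      next
        assume "w \<in> S"
        then obtain k where k: "k \<in> {1..CARD('n)-1}" "w = x k" unfolding S_def by auto
        have c1: "CARD('n) - 1 < CARD('n)" by simp
        have "k < CARD('n)" using k(1) c1 by (simp only: atLeastAtMost_iff) linarith
        then obtain rk :: 'n where rk: "idx_rank rk = k" using idx_rank_surj[of k, where 'n='n] by auto
        show ?thesis unfolding rows_def using rowr[of rk] rk k by (simp del: row_def) (metis)
      qed
    qed
  qed
  moreover have "independent (insert v S)"
    using ind v by (simp add: S_def independent_insert)
  moreover have "card (insert v S) = CARD('n)"
    using v fS cS span_base[of v S] by (auto simp: card_insert_if)
  ultimately have "rank (rowmat v x) = CARD('n)"
    by (simp add: row_rank_def dim_eq_card_independent)
  then have "det (rowmat v x) \<noteq> 0" by (simp add: det_eq_0_rank)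
  then show ?thesis using gen_cross_inner[of x v] by auto
qed




lemma gen_cross_cong:
  fixes x y :: "nat \<Rightarrow> real^('n::{finite,linorder})"
  assumes "\<And>k. 1 \<le> k \<Longrightarrow> k < CARD('n) \<Longrightarrow> x k = y k"
  shows "gen_cross x = gen_cross y"
proof -
  have "x (idx_rank r) = y (idx_rank r)" if "idx_rank r \<noteq> 0" for r::'n
    using assms[of "idx_rank r"] idx_rank_less[of r] that by simp
  then show ?thesis unfolding gen_cross_def by (intro vec_eq_iff[THEN iffD2] allI) (simp cong: if_cong)
qed

lemma vec_nth_measurable:
  fixes f :: "'b \<Rightarrow> real^'n"
  assumes "f \<in> borel_measurable N"
  shows "(\<lambda>\<omega>. f \<omega> $ c) \<in> borel_measurable N"
proof -
  have "(\<lambda>\<omega>. f \<omega> \<bullet> axis c 1) \<in> borel_measurable N" using assms by measurable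
  then show ?thesis by (simp add: inner_axis)
qed

lemma vec_measurableI:
  fixes f :: "'b \<Rightarrow> real^'n"
  assumes "\<And>c. (\<lambda>\<omega>. f \<omega> $ c) \<in> borel_measurable N"
  shows "f \<in> borel_measurable N"
  unfolding borel_measurable_euclidean_space[where 'c="real^'n"]
  using assms by (auto simp: Basis_vec_def inner_axis)

lemma gen_cross_measurable:
  fixes F :: "nat \<Rightarrow> 'b \<Rightarrow> real^('n::{finite,linorder})"
  assumes F: "\<And>k. 1 \<le> k \<Longrightarrow> k < CARD('n) \<Longrightarrow> F k \<in> borel_measurable N"
  shows "(\<lambda>\<omega>. gen_cross (\<lambda>k. F k \<omega>)) \<in> borel_measurable N"
proof (rule vec_measurableI)
  fix i :: 'n
  have ent: "(\<lambda>\<omega>. (if idx_rank r = 0 then axis i 1 $ c else F (idx_rank r) \<omega> $ c)) \<in> borel_measurable N"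
    for r c :: 'n
  proof (cases "idx_rank r = 0")
    case False
    then have "F (idx_rank r) \<in> borel_measurable N" using F idx_rank_less[of r] by simp
    then show ?thesis using False by (simp add: vec_nth_measurable)
  qed simp
  show "(\<lambda>\<omega>. gen_cross (\<lambda>k. F k \<omega>) $ i) \<in> borel_measurable N"
    unfolding gen_cross_def det_def using ent
    by (simp add: borel_measurable_sum borel_measurable_prod borel_measurable_times)
qed




definition qz :: "real \<Rightarrow> real^'n \<Rightarrow> int^'n" where
  "qz h y = (\<chi> j. \<lfloor>y$j / h\<rfloor>)"

definition cen :: "real \<Rightarrow> int^'n \<Rightarrow> real^'n" where
  "cen h v = (\<chi> j. h * (of_int (v$j) + 1/2))"

lemma infnorm_attained: "\<exists>j. \<bar>y$j\<bar> = infnorm (y::real^'n)"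
proof -
  have "infnorm y \<in> (\<lambda>i. \<bar>y \<bullet> i\<bar>) ` Basis"
    unfolding infnorm_Max by (rule Max_in) auto
  then obtain i where "i \<in> Basis" "infnorm y = \<bar>y \<bullet> i\<bar>" by auto
  then show ?thesis by (auto simp: Basis_vec_def inner_axis)
qed

lemma qz_cen:
  fixes y :: "real^'n"
  assumes h: "h > 0" and q: "qz h y = v"
  shows "norm (y - cen h v) \<le> real CARD('n) * h / 2"
proof -
  have "\<bar>(y - cen h v) $ j\<bar> \<le> h / 2" for j
  proof -
    have v: "v $ j = \<lfloor>y$j / h\<rfloor>" using q by (auto simp: qz_def)
    have a: "of_int (v$j) \<le> y$j / h" "y$j / h < of_int (v$j) + 1"
      unfolding v by linarith+
    have b: "h * of_int (v$j) \<le> y$j" "y$j < h * (of_int (v$j) + 1)"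
      using a h by (auto simp: field_simps)
    show ?thesis using b h by (auto simp: cen_def abs_if algebra_simps)
  qed
  then have "(\<Sum>j\<in>UNIV. \<bar>(y - cen h v) $ j\<bar>) \<le> (\<Sum>j\<in>(UNIV::'n set). h / 2)"
    by (intro sum_mono) auto
  then show ?thesis using norm_le_l1_cart[of "y - cen h v"] by simp
qed

lemma card_T:
  fixes I :: "int set" and j :: "'n::finite"
  assumes "finite I"
  shows "finite {v::int^'n. v$j = c \<and> (\<forall>k. v$k \<in> I)}"
    "card {v::int^'n. v$j = c \<and> (\<forall>k. v$k \<in> I)} \<le> card I ^ (CARD('n) - 1)"
proof -
  let ?T = "{v::int^'n. v$j = c \<and> (\<forall>k. v$k \<in> I)}"
  let ?f = "\<lambda>v::int^'n. restrict (\<lambda>k. v$k) (UNIV - {j})"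
  let ?P = "PiE (UNIV - {j}) (\<lambda>_. I)"
  have inj: "inj_on ?f ?T"
  proof
    fix v w assume "v \<in> ?T" "w \<in> ?T" "?f v = ?f w"
    then have "v$k = w$k" for k
      by (cases "k = j") (auto simp: fun_eq_iff split: if_splits dest: spec[of _ k])
    then show "v = w" by (simp add: vec_eq_iff)
  qed
  have sub: "?f ` ?T \<subseteq> ?P" by (auto simp: PiE_def Pi_def)
  have fP: "finite ?P" using assms by (intro finite_PiE) auto
  show "finite ?T" using inj sub fP finite_imageD finite_subset by blast
  have "card ?T \<le> card ?P" using card_inj_on_le[OF inj sub fP] .
  also have "card ?P = card I ^ (CARD('n) - 1)"
    by (simp add: card_PiE card_Diff_singleton)
  finally show "card ?T \<le> card I ^ (CARD('n) - 1)" .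
qed

lemma card_quant:
  fixes h :: real
  assumes h: "0 < h" "h \<le> 1"
  shows "finite (qz h ` {y::real^'n. infnorm y = 1})"
    "real (card (qz h ` {y::real^'n. infnorm y = 1})) \<le> 2 * real CARD('n) * (4/h) ^ (CARD('n) - 1)"
proof -
  define I where "I = {\<lfloor>-1/h\<rfloor>..\<lfloor>1/h\<rfloor>}"
  define T where "T = (\<lambda>(j::'n) c. {v::int^'n. v$j = c \<and> (\<forall>k. v$k \<in> I)})"
  have fI: "finite I" unfolding I_def by simp
  have sub: "qz h ` {y::real^'n. infnorm y = 1} \<subseteq> (\<Union>j. T j \<lfloor>-1/h\<rfloor> \<union> T j \<lfloor>1/h\<rfloor>)"
  proof
    fix v assume "v \<in> qz h ` {y::real^'n. infnorm y = 1}"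
    then obtain y :: "real^'n" where y: "infnorm y = 1" "v = qz h y" by auto
    have inI: "v$k \<in> I" for k
    proof -
      have "\<bar>y$k\<bar> \<le> 1" using component_le_infnorm_cart[of y k] y by simp
      then have "-1 \<le> y$k" "y$k \<le> 1" by auto
      then have "-1/h \<le> y$k/h" "y$k/h \<le> 1/h" using h by (intro divide_right_mono; simp)+
      then show ?thesis unfolding y I_def qz_def by (auto intro: floor_mono)
    qed
    obtain j where j: "\<bar>y$j\<bar> = 1" using infnorm_attained[of y] y by auto
    then have "y$j = 1 \<or> y$j = -1" by auto
    then have "v$j = \<lfloor>-1/h\<rfloor> \<or> v$j = \<lfloor>1/h\<rfloor>" unfolding y qz_def by auto
    then show "v \<in> (\<Union>j. T j \<lfloor>-1/h\<rfloor> \<union> T j \<lfloor>1/h\<rfloor>)"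
      using inI unfolding T_def by auto
  qed
  have fT: "finite (T j c)" for j c unfolding T_def using card_T(1)[OF fI] .
  have cT: "card (T j c) \<le> card I ^ (CARD('n) - 1)" for j c unfolding T_def using card_T(2)[OF fI] .
  have fU: "finite (\<Union>j. T j \<lfloor>-1/h\<rfloor> \<union> T j \<lfloor>1/h\<rfloor>)" using fT by auto
  show "finite (qz h ` {y::real^'n. infnorm y = 1})" using finite_subset[OF sub fU] .
  have "card (qz h ` {y::real^'n. infnorm y = 1}) \<le> card (\<Union>j. T j \<lfloor>-1/h\<rfloor> \<union> T j \<lfloor>1/h\<rfloor>)"
    using card_mono[OF fU sub] .
  also have "\<dots> \<le> (\<Sum>j\<in>UNIV. card (T j \<lfloor>-1/h\<rfloor> \<union> T j \<lfloor>1/h\<rfloor>))"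
    by (rule card_UN_le) simp
  also have "\<dots> \<le> (\<Sum>j\<in>(UNIV::'n set). 2 * card I ^ (CARD('n) - 1))"
  proof (rule sum_mono)
    fix j :: 'n
    have "card (T j \<lfloor>-1/h\<rfloor> \<union> T j \<lfloor>1/h\<rfloor>) \<le> card (T j \<lfloor>-1/h\<rfloor>) + card (T j \<lfloor>1/h\<rfloor>)"
      by (rule card_Un_le)
    then show "card (T j \<lfloor>-1/h\<rfloor> \<union> T j \<lfloor>1/h\<rfloor>) \<le> 2 * card I ^ (CARD('n) - 1)"
      using cT[of j "\<lfloor>-1/h\<rfloor>"] cT[of j "\<lfloor>1/h\<rfloor>"] by linarith
  qed
  also have "\<dots> = CARD('n) * (2 * card I ^ (CARD('n) - 1))" by simp
  finally have c1: "real (card (qz h ` {y::real^'n. infnorm y = 1})) \<le> real CARD('n) * (2 * real (card I) ^ (CARD('n) - 1))"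
    by (simp only: of_nat_le_iff[symmetric, where 'a=real] of_nat_mult of_nat_numeral of_nat_power)
  have "real (card I) = real_of_int (\<lfloor>1/h\<rfloor> - \<lfloor>-1/h\<rfloor> + 1)"
  proof -
    have "-1/h \<le> 1/h" using h by (intro divide_right_mono) auto
    then have "\<lfloor>-1/h\<rfloor> \<le> \<lfloor>1/h\<rfloor>" by (rule floor_mono)
    then show ?thesis unfolding I_def by (simp add: card_atLeastAtMost_int)
  qed
  also have "\<dots> \<le> 2/h + 2" by linarith
  also have "\<dots> \<le> 4/h" using h by (simp add: field_simps)
  finally have "real (card I) \<le> 4/h" .
  then have "real (card I) ^ (CARD('n) - 1) \<le> (4/h) ^ (CARD('n) - 1)"
    by (intro power_mono) auto
  show "real (card (qz h ` {y::real^'n. infnorm y = 1})) \<le> 2 * real CARD('n) * (4/h) ^ (CARD('n) - 1)"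
  proof -
    have "real CARD('n) * (2 * real (card I) ^ (CARD('n) - 1)) \<le> real CARD('n) * (2 * (4/h) ^ (CARD('n) - 1))"
      by (intro mult_left_mono) (use \<open>real (card I) ^ (CARD('n) - 1) \<le> (4/h) ^ (CARD('n) - 1)\<close> in auto)
    also have "\<dots> = 2 * real CARD('n) * (4/h) ^ (CARD('n) - 1)" by simp
    finally show ?thesis using c1 by linarith
  qed
qed




lemma Qset: "{y::real^('n::finite). qz h y = v} \<in> sets borel"
proof -
  have m: "(\<lambda>y::real^'n. \<lfloor>y$j / h\<rfloor>) \<in> measurable borel (count_space UNIV)" for j
  proof -
    have "(\<lambda>y::real^'n. y$j / h) \<in> borel_measurable borel"
      by (intro borel_measurable_divide vec_nth_measurable measurable_ident_sets) auto
    then show ?thesis using measurable_compose[OF _ measurable_real_floor] by blast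
  qed
  have "{y::real^'n. qz h y = v} = (\<Inter>j. (\<lambda>y::real^'n. \<lfloor>y$j / h\<rfloor>) -` {v$j} \<inter> space borel)"
    unfolding qz_def vec_eq_iff by auto
  also have "\<dots> \<in> sets borel"
    using m by (intro sets.finite_INT measurable_sets[of _ borel "count_space UNIV"]) auto
  finally show ?thesis .
qed


lemma normalize_meas:
  fixes G :: "'b \<Rightarrow> real^'n"
  assumes G: "G \<in> borel_measurable N"
  shows "(\<lambda>\<omega>. (1 / infnorm (G \<omega>)) *\<^sub>R G \<omega>) \<in> borel_measurable N"
proof (intro borel_measurable_scaleR borel_measurable_divide G borel_measurable_const)
  have "infnorm \<in> borel_measurable (borel :: (real^'n) measure)"
    by (intro borel_measurable_continuous_onI continuous_on_infnorm continuous_on_id)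
  then show "(\<lambda>\<omega>. infnorm (G \<omega>)) \<in> borel_measurable N"
    using measurable_compose[OF G] by auto
qed


lemma sum_pow2: "(\<Sum>k<K. (2::real)^k) = 2^K - 1"
  by (induct K) auto

lemma geo_aux:
  fixes T :: real assumes "T > 0"
  shows "(\<Sum>k<K. (if (2::real)^k < T then 2^k else 0)) \<le> 2 * T"
proof (induct K)
  case 0 then show ?case using assms by simp
next
  case (Suc K)
  show ?case
  proof (cases "(2::real)^K < T")
    case True
    have "(\<Sum>k<K. (if (2::real)^k < T then (2::real)^k else 0)) = (\<Sum>k<K. (2::real)^k)"
    proof (rule sum.cong)
      fix k assume "k \<in> {..<K}"
      then have "(2::real)^k \<le> (2::real)^K" by (intro power_increasing) auto
      then have "(2::real)^k < T" using True by linarith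
      then show "(if (2::real)^k < T then (2::real)^k else 0) = (2::real)^k" by simp
    qed simp
    then have "(\<Sum>k<Suc K. (if (2::real)^k < T then (2::real)^k else 0)) = (2::real)^K - 1 + (2::real)^K"
      using True by (simp add: sum_pow2)
    also have "\<dots> \<le> 2 * T" using True by simp
    finally show ?thesis .
  next
    case False
    then show ?thesis using Suc by simp
  qed
qed

locale cross_setting = prob_space M for M :: "'a measure" +
  fixes X :: "nat \<Rightarrow> 'a \<Rightarrow> real^('n::{finite,linorder})" and r :: real
  assumes n2: "CARD('n) \<ge> 2"
  and Xmeas: "\<And>j. j \<in> {1..CARD('n)} \<Longrightarrow> X j \<in> borel_measurable M"
  and Xind: "indep_vars (\<lambda>_. borel) X {1..CARD('n)}"
  and Xdistr: "\<And>j. j \<in> {1..CARD('n)} \<Longrightarrow> distr M borel (X j) = distr M borel (X 1)"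
  and rpos: "r > 0"
  and Xbnd: "\<And>j. j \<in> {1..CARD('n)} \<Longrightarrow> AE \<omega> in M. norm (X j \<omega>) < r"
begin

definition YY where "YY \<omega> = (1 / infnorm (gen_cross (\<lambda>j. X j \<omega>))) *\<^sub>R gen_cross (\<lambda>j. X j \<omega>)"

lemma Y_orth: "1 \<le> j \<Longrightarrow> j < CARD('n) \<Longrightarrow> X j \<omega> \<bullet> YY \<omega> = 0"
  unfolding YY_def using gen_cross_orth[of j "\<lambda>j. X j \<omega>"] by (simp add: inner_commute)

lemma G_meas: "(\<lambda>\<omega>. gen_cross (\<lambda>j. X j \<omega>)) \<in> borel_measurable M"
  by (rule gen_cross_measurable) (use Xmeas in auto)

lemma Y_meas: "YY \<in> borel_measurable M"
proof -
  have "(\<lambda>\<omega>. (1 / infnorm (gen_cross (\<lambda>j. X j \<omega>))) *\<^sub>R gen_cross (\<lambda>j. X j \<omega>)) \<in> borel_measurable M"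
  proof (intro borel_measurable_scaleR borel_measurable_divide G_meas borel_measurable_const)
    have "infnorm \<in> borel_measurable (borel :: (real^('n::{finite,linorder})) measure)"
      by (intro borel_measurable_continuous_onI continuous_on_infnorm continuous_on_id)
    then show "(\<lambda>\<omega>. infnorm (gen_cross (\<lambda>j. X j \<omega>))) \<in> borel_measurable M"
      using measurable_compose[OF G_meas] by auto
  qed
  then show ?thesis unfolding YY_def[abs_def] .
qed

lemma Hset: "{v::real^('n::{finite,linorder}). \<bar>v \<bullet> y\<bar> < c} \<in> sets borel"
  by measurable

lemma prob_same:
  assumes "j \<in> {1..CARD('n)}" "k \<in> {1..CARD('n)}" "H \<in> sets borel"
  shows "prob (X j -` H \<inter> space M) = prob (X k -` H \<inter> space M)"
proof -
  have "prob (X j -` H \<inter> space M) = measure (distr M borel (X j)) H"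
    using assms Xmeas by (simp add: measure_distr)
  also have "\<dots> = measure (distr M borel (X k)) H" using Xdistr[OF assms(1)] Xdistr[OF assms(2)] by (simp only:)
  also have "\<dots> = prob (X k -` H \<inter> space M)"
    using assms Xmeas by (simp add: measure_distr)
  finally show ?thesis .
qed

lemma ball_bound:
  assumes eps: "\<epsilon> > 0"
  shows "prob {\<omega>\<in>space M. norm (YY \<omega> - y) < \<epsilon>} \<le> prob {\<omega>\<in>space M. \<bar>X (CARD('n)) \<omega> \<bullet> y\<bar> < r*\<epsilon>} ^ (CARD('n) - 1)"
proof -
  define H where "H = {v::real^('n::{finite,linorder}). \<bar>v \<bullet> y\<bar> < r*\<epsilon>}"
  define J where "J = {1..CARD('n) - 1}"
  have HB: "H \<in> sets borel" unfolding H_def by (rule Hset)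
  have J: "J \<noteq> {}" "finite J" "J \<subseteq> {1..CARD('n)}" unfolding J_def using n2 by auto
  define T where "T = (\<Inter>j\<in>J. X j -` H \<inter> space M)"
  have AEb: "AE \<omega> in M. \<forall>j\<in>J. norm (X j \<omega>) < r"
    by (rule AE_finite_allI) (use J Xbnd in auto)
  have TM: "T \<in> sets M" unfolding T_def
    using J HB Xmeas by (intro sets.finite_INT) (auto intro: measurable_sets)
  have "AE \<omega> in M. \<omega> \<in> {\<omega>\<in>space M. norm (YY \<omega> - y) < \<epsilon>} \<longrightarrow> \<omega> \<in> T"
    using AEb
  proof eventually_elim
    case (elim \<omega>)
    show ?case
    proof
      assume w: "\<omega> \<in> {\<omega>\<in>space M. norm (YY \<omega> - y) < \<epsilon>}"
      have "X j \<omega> \<in> H" if j: "j \<in> J" for j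
      proof -
        have "X j \<omega> \<bullet> YY \<omega> = 0" using j J_def Y_orth by auto
        then have "\<bar>X j \<omega> \<bullet> y\<bar> = \<bar>X j \<omega> \<bullet> (y - YY \<omega>)\<bar>" by (simp add: inner_diff_right)
        also have "\<dots> \<le> norm (X j \<omega>) * norm (y - YY \<omega>)" by (rule Cauchy_Schwarz_ineq2)
        also have "\<dots> < r * \<epsilon>"
          using elim j w by (intro mult_strict_mono') (auto simp: norm_minus_commute)
        finally show ?thesis unfolding H_def by simp
      qed
      then show "\<omega> \<in> T" using w unfolding T_def by auto
    qed
  qed
  then have "prob {\<omega>\<in>space M. norm (YY \<omega> - y) < \<epsilon>} \<le> prob T"
    using TM by (rule finite_measure_mono_AE)
  also have "prob T = (\<Prod>j\<in>J. prob (X j -` H \<inter> space M))"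
    unfolding T_def using J HB by (intro indep_varsD[OF Xind]) auto
  also have "\<dots> = (\<Prod>j\<in>J. prob (X (CARD('n)) -` H \<inter> space M))"
    using J HB by (intro prod.cong refl prob_same) auto
  also have "\<dots> = prob (X (CARD('n)) -` H \<inter> space M) ^ (CARD('n) - 1)"
    by (simp add: J_def)
  also have "X (CARD('n)) -` H \<inter> space M = {\<omega>\<in>space M. \<bar>X (CARD('n)) \<omega> \<bullet> y\<bar> < r*\<epsilon>}"
    unfolding H_def by auto
  finally show ?thesis .
qed


lemma liminf_pos_const:
  assumes "0 < Liminf (at_right (0::real)) (f :: real \<Rightarrow> ereal)"
  obtains c b where "0 < c" "0 < b" "\<And>e. 0 < e \<Longrightarrow> e < b \<Longrightarrow> ereal c < f e"
proof -
  obtain c where c: "0 < ereal c" "ereal c < Liminf (at_right (0::real)) f"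
    using ereal_dense2[OF assms] by blast
  have "eventually (\<lambda>e. ereal c < f e) (at_right (0::real))" using less_LiminfD[OF c(2)] .
  then obtain b where "b > 0" "\<And>e. 0 < e \<Longrightarrow> e < b \<Longrightarrow> ereal c < f e"
    unfolding eventually_at_right_field by auto
  then show ?thesis using that c(1) by auto
qed

lemma liminf_pos_intro:
  assumes "0 < c" "0 < b" "\<And>e. 0 < e \<Longrightarrow> e < b \<Longrightarrow> c \<le> g e"
  shows "0 < Liminf (at_right (0::real)) (\<lambda>e. ereal (g e))"
proof -
  have "eventually (\<lambda>e. ereal c \<le> ereal (g e)) (at_right (0::real))"
    unfolding eventually_at_right_field using assms by auto
  then have "ereal c \<le> Liminf (at_right (0::real)) (\<lambda>e. ereal (g e))" by (rule Liminf_bounded)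
  moreover have "(0::ereal) < ereal c" using assms(1) by simp
  ultimately show ?thesis by (meson less_le_trans)
qed

lemma part1:
  assumes y: "y \<in> mould M (CARD('n) - 1) YY"
  shows "(0::real) \<in> mould M 1 (\<lambda>\<omega>. X (CARD('n)) \<omega> \<bullet> y)"
proof -
  define m where "m = CARD('n) - 1"
  have m1: "m \<ge> 1" unfolding m_def using n2 by auto
  define p where "p = (\<lambda>t. prob {\<omega>\<in>space M. \<bar>X (CARD('n)) \<omega> \<bullet> y\<bar> < t})"
  obtain c b where cb: "0 < c" "0 < b"
    "\<And>e. 0 < e \<Longrightarrow> e < b \<Longrightarrow> ereal c < ereal (prob {\<omega>\<in>space M. norm (YY \<omega> - y) < e} / e ^ m)"
    using y unfolding mould_def m_def by (auto elim!: liminf_pos_const)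
  define c' where "c' = min 1 c"
  have c': "0 < c'" "c' \<le> 1" "c' \<le> c" unfolding c'_def using cb by auto
  have c'm: "c' ^ m \<le> c"
    using power_decreasing[OF m1, of c'] c' by simp
  have key: "c' * e \<le> p (r * e)" if e: "0 < e" "e < b" for e
  proof -
    have "c < prob {\<omega>\<in>space M. norm (YY \<omega> - y) < e} / e ^ m" using cb(3)[OF e] by simp
    then have "c * e ^ m < prob {\<omega>\<in>space M. norm (YY \<omega> - y) < e}"
      using e by (simp add: field_simps)
    moreover have "(c' * e) ^ m \<le> c * e ^ m"
      using c'm e by (simp add: power_mult_distrib mult_right_mono)
    moreover have "prob {\<omega>\<in>space M. norm (YY \<omega> - y) < e} \<le> p (r * e) ^ m"
      unfolding p_def m_def using ball_bound[OF e(1)] by simp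
    ultimately have "(c' * e) ^ m \<le> p (r * e) ^ m" by linarith
    moreover obtain k where "m = Suc k" using m1 by (cases m) auto
    ultimately show ?thesis using power_le_imp_le_base[of "c' * e" k "p (r * e)"] p_def by simp
  qed
  have "0 < Liminf (at_right (0::real))
      (\<lambda>d. ereal (prob {\<omega>\<in>space M. norm (X (CARD('n)) \<omega> \<bullet> y - 0) < d} / d ^ 1))"
  proof (rule liminf_pos_intro[of "c' / r" "r * b"])
    show "0 < c' / r" "0 < r * b" using c' cb rpos by auto
    fix d assume d: "0 < d" "d < r * b"
    have e: "0 < d / r" "d / r < b" using d rpos by (auto simp: field_simps)
    have "c' * (d / r) \<le> p d" using key[OF e] rpos by simp
    then have "c' / r \<le> p d / d" using d rpos by (simp add: field_simps)
    then show "c' / r \<le> prob {\<omega>\<in>space M. norm (X (CARD('n)) \<omega> \<bullet> y - 0) < d} / d ^ 1"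
      by (simp add: p_def)
  qed
  then show ?thesis unfolding mould_def by simp
qed

lemma indep_YX: "indep_var borel YY borel (X (CARD('n)))"
proof -
  define A where "A = {1..CARD('n) - 1}"
  define B where "B = {CARD('n)}"
  have AB: "A \<inter> B = {}" "A \<subseteq> {1..CARD('n)}" "B \<subseteq> {1..CARD('n)}"
    unfolding A_def B_def using n2 by auto
  note iv = indep_var_restrict[OF Xind AB]
  define Y1 where "Y1 = (\<lambda>f::nat \<Rightarrow> real^('n::{finite,linorder}). (1 / infnorm (gen_cross f)) *\<^sub>R gen_cross f)"
  define Y2 where "Y2 = (\<lambda>f::nat \<Rightarrow> real^('n::{finite,linorder}). f (CARD('n)))"
  have m1: "Y1 \<in> borel_measurable (PiM A (\<lambda>_. borel))"
  proof -
    have "(\<lambda>f. gen_cross (\<lambda>k. f k)) \<in> borel_measurable (PiM A (\<lambda>_. borel :: (real^('n::{finite,linorder})) measure))"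
      by (rule gen_cross_measurable) (auto simp: A_def intro!: measurable_component_singleton)
    then show ?thesis unfolding Y1_def by (intro normalize_meas) simp
  qed
  have m2: "Y2 \<in> borel_measurable (PiM B (\<lambda>_. borel))"
    unfolding Y2_def B_def by (intro measurable_component_singleton) simp
  have "indep_var borel (Y1 \<circ> (\<lambda>\<omega>. restrict (\<lambda>i. X i \<omega>) A)) borel (Y2 \<circ> (\<lambda>\<omega>. restrict (\<lambda>i. X i \<omega>) B))"
    by (rule indep_var_compose[OF iv m1 m2])
  moreover have "Y1 \<circ> (\<lambda>\<omega>. restrict (\<lambda>i. X i \<omega>) A) = YY"
  proof
    fix \<omega>
    have "gen_cross (restrict (\<lambda>i. X i \<omega>) A) = gen_cross (\<lambda>j. X j \<omega>)"
      by (rule gen_cross_cong) (auto simp: A_def)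
    then show "(Y1 \<circ> (\<lambda>\<omega>. restrict (\<lambda>i. X i \<omega>) A)) \<omega> = YY \<omega>"
      unfolding Y1_def YY_def by simp
  qed
  moreover have "Y2 \<circ> (\<lambda>\<omega>. restrict (\<lambda>i. X i \<omega>) B) = X (CARD('n))"
    unfolding Y2_def B_def by auto
  ultimately show ?thesis by simp
qed

lemma Y_inf:
  assumes li: "AE \<omega> in M. inj_on (\<lambda>j. X j \<omega>) {1..CARD('n)-1} \<and>
                    independent ((\<lambda>j. X j \<omega>) ` {1..CARD('n)-1})"
  shows "AE \<omega> in M. infnorm (YY \<omega>) = 1"
  using li
proof eventually_elim
  case (elim \<omega>)
  then have "gen_cross (\<lambda>j. X j \<omega>) \<noteq> 0" by (intro gen_cross_nz) auto
  then have "infnorm (gen_cross (\<lambda>j. X j \<omega>)) > 0" by (simp add: infnorm_pos_lt)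
  then show ?case unfolding YY_def by (simp add: infnorm_mul)
qed

lemma part2_bound:
  assumes li: "AE \<omega> in M. inj_on (\<lambda>j. X j \<omega>) {1..CARD('n)-1} \<and>
                    independent ((\<lambda>j. X j \<omega>) ` {1..CARD('n)-1})"
  and e: "0 < \<epsilon>" "\<epsilon> \<le> 1"
  shows "\<epsilon> / (32 * real CARD('n) ^ 2) \<le> prob {\<omega>\<in>space M. \<bar>X (CARD('n)) \<omega> \<bullet> YY \<omega>\<bar> < 2*r*\<epsilon>}"
proof -
  define m where "m = CARD('n) - 1"
  have m1: "m \<ge> 1" unfolding m_def using n2 by auto
  define h where "h = \<epsilon> / real CARD('n)"
  have nge1: "real CARD('n) \<ge> 1" using n2 by simp
  have h: "0 < h" "h \<le> 1" unfolding h_def using e nge1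
    by (auto simp: field_simps intro: order_trans[OF e(2)])
  define S where "S = qz h ` {y::real^('n::{finite,linorder}). infnorm y = 1}"
  have fS: "finite S" unfolding S_def using card_quant(1)[OF h] .
  have cS: "real (card S) \<le> 2 * real CARD('n) * (4/h) ^ m"
    unfolding S_def m_def using card_quant(2)[OF h] .
  have XnM[measurable]: "X (CARD('n)) \<in> borel_measurable M" using Xmeas n2 by auto
  have YM[measurable]: "YY \<in> borel_measurable M" by (rule Y_meas)
  define A where "A v = YY -` {y. qz h y = v} \<inter> space M" for v
  define B where "B v = X (CARD('n)) -` {w. \<bar>w \<bullet> cen h v\<bar> < r*\<epsilon>} \<inter> space M" for v
  define \<mu> where "\<mu> v = prob (A v)" for v
  define p where "p v = prob (B v)" for v
  have AM: "A v \<in> sets M" for v unfolding A_def by (rule measurable_sets[OF YM Qset])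
  have BM: "B v \<in> sets M" for v unfolding B_def by (rule measurable_sets[OF XnM Hset])
  have indAB: "prob (A v \<inter> B v) = \<mu> v * p v" for v
  proof -
    have "(\<lambda>x. (YY x, X (CARD('n)) x)) -` ({y. qz h y = v} \<times> {w. \<bar>w \<bullet> cen h v\<bar> < r*\<epsilon>}) \<inter> space M = A v \<inter> B v"
      unfolding A_def B_def by auto
    then show ?thesis using indep_varD[OF indep_YX Qset Hset, of h v "cen h v" "r*\<epsilon>"]
      unfolding \<mu>_def p_def A_def B_def by simp
  qed
  have disjA: "disjoint_family_on A S" unfolding disjoint_family_on_def A_def by auto
  have disjAB: "disjoint_family_on (\<lambda>v. A v \<inter> B v) S" unfolding disjoint_family_on_def A_def by auto
  have sum\<mu>: "1 \<le> (\<Sum>v\<in>S. \<mu> v)"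
  proof -
    have "AE \<omega> in M. \<omega> \<in> space M \<longrightarrow> \<omega> \<in> (\<Union>v\<in>S. A v)"
      using Y_inf[OF li]
    proof eventually_elim
      case (elim \<omega>)
      then show ?case unfolding A_def S_def by auto
    qed
    then have "prob (space M) \<le> prob (\<Union>v\<in>S. A v)"
      using AM fS by (intro finite_measure_mono_AE) auto
    also have "\<dots> = (\<Sum>v\<in>S. \<mu> v)"
      unfolding \<mu>_def using fS AM disjA by (intro finite_measure_finite_Union) auto
    finally show ?thesis by (simp add: prob_space)
  qed
  have \<mu>p: "\<mu> v \<le> p v ^ m" for v
  proof -
    have sub: "A v \<subseteq> {\<omega>\<in>space M. norm (YY \<omega> - cen h v) < \<epsilon>}"
    proof
      fix \<omega> assume "\<omega> \<in> A v"
      then have "\<omega> \<in> space M" "qz h (YY \<omega>) = v" unfolding A_def by auto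
      moreover have "real CARD('n) * h / 2 < \<epsilon>" unfolding h_def using e nge1 by simp
      ultimately show "\<omega> \<in> {\<omega>\<in>space M. norm (YY \<omega> - cen h v) < \<epsilon>}"
        using qz_cen[OF h(1), of "YY \<omega>" v] by simp
    qed
    have "{\<omega>\<in>space M. norm (YY \<omega> - cen h v) < \<epsilon>} \<in> sets M" by measurable
    then have "\<mu> v \<le> prob {\<omega>\<in>space M. norm (YY \<omega> - cen h v) < \<epsilon>}"
      unfolding \<mu>_def using sub by (intro finite_measure_mono) auto
    also have "\<dots> \<le> prob {\<omega>\<in>space M. \<bar>X (CARD('n)) \<omega> \<bullet> cen h v\<bar> < r*\<epsilon>} ^ m"
      unfolding m_def by (rule ball_bound[OF e(1)])
    also have "{\<omega>\<in>space M. \<bar>X (CARD('n)) \<omega> \<bullet> cen h v\<bar> < r*\<epsilon>} = B v"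
      unfolding B_def by auto
    finally show ?thesis unfolding p_def .
  qed
  have main_lb: "(\<Sum>v\<in>S. \<mu> v * p v) \<le> prob {\<omega>\<in>space M. \<bar>X (CARD('n)) \<omega> \<bullet> YY \<omega>\<bar> < 2*r*\<epsilon>}"
  proof -
    have "(\<Sum>v\<in>S. \<mu> v * p v) = (\<Sum>v\<in>S. prob (A v \<inter> B v))" using indAB by simp
    also have "\<dots> = prob (\<Union>v\<in>S. A v \<inter> B v)"
      using fS AM BM disjAB by (intro finite_measure_finite_Union[symmetric]) auto
    also have "\<dots> \<le> prob {\<omega>\<in>space M. \<bar>X (CARD('n)) \<omega> \<bullet> YY \<omega>\<bar> < 2*r*\<epsilon>}"
    proof (rule finite_measure_mono_AE)
      show "{\<omega>\<in>space M. \<bar>X (CARD('n)) \<omega> \<bullet> YY \<omega>\<bar> < 2*r*\<epsilon>} \<in> sets M" by measurable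
      have "AE \<omega> in M. norm (X (CARD('n)) \<omega>) < r" using Xbnd n2 by auto
      then show "AE \<omega> in M. \<omega> \<in> (\<Union>v\<in>S. A v \<inter> B v) \<longrightarrow> \<omega> \<in> {\<omega>\<in>space M. \<bar>X (CARD('n)) \<omega> \<bullet> YY \<omega>\<bar> < 2*r*\<epsilon>}"
      proof eventually_elim
        case (elim \<omega>)
        show ?case
        proof
          assume "\<omega> \<in> (\<Union>v\<in>S. A v \<inter> B v)"
          then obtain v where w: "\<omega> \<in> space M" "qz h (YY \<omega>) = v" "\<bar>X (CARD('n)) \<omega> \<bullet> cen h v\<bar> < r*\<epsilon>"
            unfolding A_def B_def by auto
          have "real CARD('n) * h / 2 < \<epsilon>" unfolding h_def using e nge1 by simp
          then have d: "norm (YY \<omega> - cen h v) < \<epsilon>" using qz_cen[OF h(1) w(2)] by linarith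
          have "\<bar>X (CARD('n)) \<omega> \<bullet> YY \<omega>\<bar> \<le> \<bar>X (CARD('n)) \<omega> \<bullet> cen h v\<bar> + \<bar>X (CARD('n)) \<omega> \<bullet> (YY \<omega> - cen h v)\<bar>"
            by (simp add: inner_diff_right)
          also have "\<bar>X (CARD('n)) \<omega> \<bullet> (YY \<omega> - cen h v)\<bar> \<le> norm (X (CARD('n)) \<omega>) * norm (YY \<omega> - cen h v)"
            by (rule Cauchy_Schwarz_ineq2)
          also have "norm (X (CARD('n)) \<omega>) * norm (YY \<omega> - cen h v) < r * \<epsilon>"
            using elim d by (intro mult_strict_mono') auto
          finally show "\<omega> \<in> {\<omega>\<in>space M. \<bar>X (CARD('n)) \<omega> \<bullet> YY \<omega>\<bar> < 2*r*\<epsilon>}"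
            using w(1,3) by simp
        qed
      qed
    qed
    finally show ?thesis .
  qed
  define N where "N = card S"
  have N1: "N \<ge> 1"
  proof (rule ccontr)
    assume "\<not> N \<ge> 1"
    then have "card S = 0" unfolding N_def by simp
    then have "S = {}" using fS by simp
    then show False using sum\<mu> by simp
  qed
  define C where "C = 16 * real CARD('n) ^ 2"
  have Cpos: "C > 0" unfolding C_def using nge1 by simp
  define Bg where "Bg = {v\<in>S. 1 / (2 * real N) \<le> \<mu> v}"
  have BgS: "Bg \<subseteq> S" unfolding Bg_def by auto
  have "(\<Sum>v\<in>S-Bg. \<mu> v) \<le> (\<Sum>v\<in>S-Bg. 1 / (2 * real N))"
    by (intro sum_mono) (auto simp: Bg_def)
  also have "\<dots> = real (card (S - Bg)) / (2 * real N)" by simp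
  also have "\<dots> \<le> real N / (2 * real N)"
    unfolding N_def using fS by (intro divide_right_mono) (auto intro: card_mono)
  also have "\<dots> = 1/2" using N1 by simp
  finally have small: "(\<Sum>v\<in>S-Bg. \<mu> v) \<le> 1/2" .
  have "(\<Sum>v\<in>S. \<mu> v) = (\<Sum>v\<in>S-Bg. \<mu> v) + (\<Sum>v\<in>Bg. \<mu> v)"
    using sum.subset_diff[OF BgS fS] .
  then have big: "1/2 \<le> (\<Sum>v\<in>Bg. \<mu> v)" using sum\<mu> small by linarith
  have pB: "\<epsilon> / C \<le> p v" if v: "v \<in> Bg" for v
  proof -
    have "2 * real N \<le> 2 * (2 * real CARD('n) * (4/h) ^ m)" using cS unfolding N_def by simp
    also have "\<dots> = (4 * real CARD('n)) * (4 * real CARD('n) / \<epsilon>) ^ m"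
    proof -
      have "4 / h = 4 * real CARD('n) / \<epsilon>" unfolding h_def by simp
      then show ?thesis by simp
    qed
    also have "\<dots> \<le> (4 * real CARD('n)) ^ m * (4 * real CARD('n) / \<epsilon>) ^ m"
    proof (rule mult_right_mono)
      show "4 * real CARD('n) \<le> (4 * real CARD('n)) ^ m"
        using power_increasing[OF m1, of "4 * real CARD('n)"] nge1 by simp
    qed (use e in simp)
    also have "\<dots> = ((4 * real CARD('n)) * (4 * real CARD('n) / \<epsilon>)) ^ m"
      by (rule power_mult_distrib[symmetric])
    also have "(4 * real CARD('n)) * (4 * real CARD('n) / \<epsilon>) = C / \<epsilon>"
      unfolding C_def by (simp add: power2_eq_square)
    finally have N2: "2 * real N \<le> (C / \<epsilon>) ^ m" .
    have "(\<epsilon> / C) ^ m = 1 / (C / \<epsilon>) ^ m" by (simp add: power_divide)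
    also have "\<dots> \<le> 1 / (2 * real N)"
      using N2 N1 by (intro divide_left_mono) auto
    also have "\<dots> \<le> \<mu> v" using v unfolding Bg_def by auto
    also have "\<dots> \<le> p v ^ m" by (rule \<mu>p)
    finally have "(\<epsilon> / C) ^ m \<le> p v ^ m" .
    moreover obtain k where "m = Suc k" using m1 by (cases m) auto
    moreover have "0 \<le> p v" unfolding p_def by simp
    ultimately show ?thesis using power_le_imp_le_base by metis
  qed
  have "\<epsilon> / (32 * real CARD('n) ^ 2) = (\<epsilon> / C) * (1/2)" unfolding C_def by simp
  also have "\<dots> \<le> (\<epsilon> / C) * (\<Sum>v\<in>Bg. \<mu> v)"
    using big e Cpos by (intro mult_left_mono) auto
  also have "\<dots> = (\<Sum>v\<in>Bg. \<mu> v * (\<epsilon> / C))" by (simp add: sum_distrib_left mult.commute sum_divide_distrib)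
  also have "\<dots> \<le> (\<Sum>v\<in>Bg. \<mu> v * p v)"
    using pB by (intro sum_mono mult_left_mono) (auto simp: \<mu>_def)
  also have "\<dots> \<le> (\<Sum>v\<in>S. \<mu> v * p v)"
    using BgS fS by (intro sum_mono2) (auto simp: \<mu>_def p_def)
  also have "\<dots> \<le> prob {\<omega>\<in>space M. \<bar>X (CARD('n)) \<omega> \<bullet> YY \<omega>\<bar> < 2*r*\<epsilon>}" by (rule main_lb)
  finally show ?thesis .
qed

lemma part2_quant:
  assumes li: "AE \<omega> in M. inj_on (\<lambda>j. X j \<omega>) {1..CARD('n)-1} \<and>
                    independent ((\<lambda>j. X j \<omega>) ` {1..CARD('n)-1})"
  and d: "0 < d" "d \<le> 2 * r"
  shows "d / (64 * r * real CARD('n) ^ 2) \<le> prob {\<omega>\<in>space M. \<bar>X (CARD('n)) \<omega> \<bullet> YY \<omega>\<bar> < d}"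
proof -
  have e: "0 < d / (2*r)" "d / (2*r) \<le> 1" using d rpos by (auto simp: field_simps)
  have "d / (64 * r * real CARD('n) ^ 2) = (d / (2*r)) / (32 * real CARD('n) ^ 2)" by simp
  also have "\<dots> \<le> prob {\<omega>\<in>space M. \<bar>X (CARD('n)) \<omega> \<bullet> YY \<omega>\<bar> < 2*r*(d / (2*r))}"
    by (rule part2_bound[OF li e])
  also have "2*r*(d / (2*r)) = d" using rpos by simp
  finally show ?thesis .
qed

lemma part2:
  assumes li: "AE \<omega> in M. inj_on (\<lambda>j. X j \<omega>) {1..CARD('n)-1} \<and>
                    independent ((\<lambda>j. X j \<omega>) ` {1..CARD('n)-1})"
  shows "(0::real) \<in> mould M 1 (\<lambda>\<omega>. X (CARD('n)) \<omega> \<bullet> YY \<omega>)"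
proof -
  have "0 < Liminf (at_right (0::real))
      (\<lambda>d. ereal (prob {\<omega>\<in>space M. norm (X (CARD('n)) \<omega> \<bullet> YY \<omega> - 0) < d} / d ^ 1))"
  proof (rule liminf_pos_intro[of "1 / (64 * r * real CARD('n) ^ 2)" "2 * r"])
    show "0 < 1 / (64 * r * real CARD('n) ^ 2)" "0 < 2 * r" using rpos by auto
    fix d assume d: "0 < d" "d < 2 * r"
    have "d / (64 * r * real CARD('n) ^ 2) \<le> prob {\<omega>\<in>space M. \<bar>X (CARD('n)) \<omega> \<bullet> YY \<omega>\<bar> < d}"
      using part2_quant[OF li] d by simp
    then show "1 / (64 * r * real CARD('n) ^ 2) \<le> prob {\<omega>\<in>space M. norm (X (CARD('n)) \<omega> \<bullet> YY \<omega> - 0) < d} / d ^ 1"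
      using d by (simp add: field_simps)
  qed
  then show ?thesis unfolding mould_def by simp
qed

lemma part3:
  assumes li: "AE \<omega> in M. inj_on (\<lambda>j. X j \<omega>) {1..CARD('n)-1} \<and>
                    independent ((\<lambda>j. X j \<omega>) ` {1..CARD('n)-1})"
  shows "(\<integral>\<^sup>+ \<omega>. (if X (CARD('n)) \<omega> \<bullet> YY \<omega> = 0 then \<infinity> else ennreal (1 / \<bar>X (CARD('n)) \<omega> \<bullet> YY \<omega>\<bar>)) \<partial>M) = \<infinity>"
    (is "?I = \<infinity>")
proof -
  define Z where "Z \<omega> = X (CARD('n)) \<omega> \<bullet> YY \<omega>" for \<omega>
  define d0 where "d0 = 2 * r"
  define a where "a = 1 / (64 * r * real CARD('n) ^ 2)"
  have d0: "d0 > 0" unfolding d0_def using rpos by simp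
  have a: "a > 0" unfolding a_def using rpos by simp
  have XnM[measurable]: "X (CARD('n)) \<in> borel_measurable M" using Xmeas n2 by auto
  have YM[measurable]: "YY \<in> borel_measurable M" by (rule Y_meas)
  define E where "E k = {\<omega>\<in>space M. \<bar>Z \<omega>\<bar> < d0 / 2^k}" for k :: nat
  have EM: "E k \<in> sets M" for k unfolding E_def Z_def by measurable
  define c where "c k = (2::real)^k / (2 * d0)" for k :: nat
  have lbK: "ennreal (real K * a / 2) \<le> ?I" for K
  proof -
    have s1: "(\<integral>\<^sup>+ \<omega>. (\<Sum>k<K. ennreal (c k) * indicator (E k) \<omega>) \<partial>M) \<le> ?I"
    proof (rule nn_integral_mono)
      fix \<omega> assume w: "\<omega> \<in> space M"
      have cnn: "0 \<le> c k" for k unfolding c_def using d0 by simp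
      have "(\<Sum>k<K. ennreal (c k) * indicator (E k) \<omega>) = (\<Sum>k<K. ennreal (if \<omega> \<in> E k then c k else 0))"
        by (intro sum.cong) (auto simp: indicator_def)
      also have "\<dots> = ennreal (\<Sum>k<K. if \<omega> \<in> E k then c k else 0)"
        by (rule sum_ennreal) (use cnn in auto)
      finally have eq: "(\<Sum>k<K. ennreal (c k) * indicator (E k) \<omega>) = ennreal (\<Sum>k<K. if \<omega> \<in> E k then c k else 0)" .
      show "(\<Sum>k<K. ennreal (c k) * indicator (E k) \<omega>) \<le> (if X (CARD('n)) \<omega> \<bullet> YY \<omega> = 0 then \<infinity> else ennreal (1 / \<bar>X (CARD('n)) \<omega> \<bullet> YY \<omega>\<bar>))"
      proof (cases "Z \<omega> = 0")
        case False
        define z where "z = \<bar>Z \<omega>\<bar>"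
        have z: "z > 0" unfolding z_def using False by simp
        have "(\<Sum>k<K. if \<omega> \<in> E k then c k else 0) = (\<Sum>k<K. (if (2::real)^k < d0 / z then 2^k else 0) / (2 * d0))"
        proof (rule sum.cong)
          fix k assume "k \<in> {..<K}"
          have "\<omega> \<in> E k \<longleftrightarrow> (2::real)^k < d0 / z"
            using w z by (auto simp: E_def z_def field_simps)
          then show "(if \<omega> \<in> E k then c k else 0) = (if (2::real)^k < d0 / z then 2^k else 0) / (2 * d0)"
            by (simp add: c_def)
        qed simp
        also have "\<dots> = (\<Sum>k<K. (if (2::real)^k < d0 / z then 2^k else 0)) / (2 * d0)"
          by (simp add: sum_divide_distrib)
        also have "\<dots> \<le> (2 * (d0 / z)) / (2 * d0)"
          using geo_aux[of "d0 / z" K] d0 z by (intro divide_right_mono) auto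
        also have "\<dots> = 1 / z" using d0 z by (simp add: field_simps)
        finally have "(\<Sum>k<K. if \<omega> \<in> E k then c k else 0) \<le> 1 / z" .
        then show ?thesis unfolding eq using False z_def by (simp add: ennreal_leI Z_def)
      qed (simp add: Z_def)
    qed
    have s2: "(\<integral>\<^sup>+ \<omega>. (\<Sum>k<K. ennreal (c k) * indicator (E k) \<omega>) \<partial>M) = (\<Sum>k<K. ennreal (c k) * emeasure M (E k))"
      using EM by (subst nn_integral_sum) (auto simp: nn_integral_cmult_indicator)
    have s3: "(\<Sum>k<K. ennreal (a / 2)) \<le> (\<Sum>k<K. ennreal (c k) * emeasure M (E k))"
    proof (rule sum_mono)
      fix k :: nat
      have dk: "0 < d0 / 2^k" "d0 / 2^k \<le> 2 * r" using d0 unfolding d0_def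
        by (auto simp: field_simps intro: order_trans[of _ "2*r"])
      have "a * (d0 / 2^k) \<le> prob (E k)"
        using part2_quant[OF li dk] unfolding a_def E_def Z_def by (simp add: ac_simps)
      then have "c k * (a * (d0 / 2^k)) \<le> c k * prob (E k)" by (intro mult_left_mono) (use d0 in \<open>auto simp: c_def\<close>)
      moreover have "c k * (a * (d0 / 2^k)) = a / 2" using d0 by (simp add: c_def field_simps)
      ultimately have "a / 2 \<le> c k * prob (E k)" by linarith
      then have "ennreal (a / 2) \<le> ennreal (c k * prob (E k))" by (rule ennreal_leI)
      also have "\<dots> = ennreal (c k) * emeasure M (E k)"
      proof -
        have "0 \<le> c k" unfolding c_def using d0 by simp
        then show ?thesis by (simp add: emeasure_eq_measure ennreal_mult)
      qed
      finally show "ennreal (a / 2) \<le> ennreal (c k) * emeasure M (E k)" .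
    qed
    have s4: "(\<Sum>k<K. ennreal (a / 2)) = ennreal (real K * a / 2)"
    proof -
      have "(\<Sum>k<K. ennreal (a / 2)) = of_nat K * ennreal (a / 2)" by simp
      also have "\<dots> = ennreal (real K) * ennreal (a / 2)" by (simp add: ennreal_of_nat_eq_real_of_nat)
      also have "\<dots> = ennreal (real K * (a / 2))" using a by (simp add: ennreal_mult[symmetric])
      finally show ?thesis by simp
    qed
    have "ennreal (real K * a / 2) = (\<Sum>k<K. ennreal (a / 2))" using s4 by simp
    also have "\<dots> \<le> (\<Sum>k<K. ennreal (c k) * emeasure M (E k))" by (rule s3)
    also have "\<dots> = (\<integral>\<^sup>+ \<omega>. (\<Sum>k<K. ennreal (c k) * indicator (E k) \<omega>) \<partial>M)" by (rule s2[symmetric])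
    also have "\<dots> \<le> ?I" by (rule s1)
    finally show ?thesis .
  qed
  show ?thesis
  proof (rule ccontr)
    assume "?I \<noteq> \<infinity>"
    then obtain t where t: "?I = ennreal t" "t \<ge> 0" by (cases ?I) auto
    define K where "K = nat \<lceil>2 * t / a\<rceil> + 1"
    have "2 * t / a < real K" unfolding K_def by linarith
    then have "t < real K * a / 2" using a by (simp add: field_simps)
    moreover have "ennreal (real K * a / 2) \<le> ennreal t" using lbK[of K] t by simp
    then have "real K * a / 2 \<le> t" using t by (auto simp: ennreal_le_iff2)
    ultimately show False by simp
  qed
qed

end


theorem mainTheorem9:
  fixes M :: "'a measure" and X :: "nat \<Rightarrow> 'a \<Rightarrow> real^('n::{finite,linorder})"
    and r :: real
  defines "n \<equiv> CARD('n)"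
  defines "Y \<equiv> (\<lambda>\<omega>. (1 / infnorm (gen_cross (\<lambda>j. X j \<omega>))) *\<^sub>R gen_cross (\<lambda>j. X j \<omega>))"
  assumes "prob_space M"
    and "n \<ge> 2"
    and "\<forall>j\<in>{1..n}. X j \<in> borel_measurable M"
    and "prob_space.indep_vars M (\<lambda>_. borel) X {1..n}"
    and "\<forall>j\<in>{1..n}. distr M borel (X j) = distr M borel (X 1)"
    and "AE \<omega> in M. inj_on (\<lambda>j. X j \<omega>) {1..n-1} \<and>
                    independent ((\<lambda>j. X j \<omega>) ` {1..n-1})"
    and "r > 0"
    and "\<forall>j\<in>{1..n}. AE \<omega> in M. norm (X j \<omega>) < r"
  shows "(\<forall>y \<in> mould M (n - 1) Y. (0::real) \<in> mould M 1 (\<lambda>\<omega>. X n \<omega> \<bullet> y))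
       \<and> (0::real) \<in> mould M 1 (\<lambda>\<omega>. X n \<omega> \<bullet> Y \<omega>)
       \<and> (\<integral>\<^sup>+ \<omega>. (if X n \<omega> \<bullet> Y \<omega> = 0 then \<infinity> else ennreal (1 / \<bar>X n \<omega> \<bullet> Y \<omega>\<bar>)) \<partial>M) = \<infinity>"
proof -
  have cs: "cross_setting M X r"
    unfolding cross_setting_def cross_setting_axioms_def
  proof (intro conjI allI impI)
    show "prob_space M" by (rule assms(3))
    show "2 \<le> CARD('n)" using assms(4) unfolding n_def .
    show "\<And>j. j \<in> {1..CARD('n)} \<Longrightarrow> X j \<in> borel_measurable M" using assms(5) unfolding n_def by blast
    show "prob_space.indep_vars M (\<lambda>_. borel) X {1..CARD('n)}" using assms(6) unfolding n_def .
    show "\<And>j. j \<in> {1..CARD('n)} \<Longrightarrow> distr M borel (X j) = distr M borel (X 1)" using assms(7) unfolding n_def by blast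
    show "0 < r" by (rule assms(9))
    show "\<And>j. j \<in> {1..CARD('n)} \<Longrightarrow> AE \<omega> in M. norm (X j \<omega>) < r" using assms(10) unfolding n_def by blast
  qed
  interpret cross_setting M X r by (rule cs)
  have Yeq: "Y = YY" unfolding Y_def by (simp add: fun_eq_iff YY_def)
  show ?thesis
    unfolding Yeq n_def using part1 part2[OF assms(8)[unfolded n_def]] part3[OF assms(8)[unfolded n_def]]
    by blast
qed

end
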